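(* For all integers $m\ge1$, $n\ge0$ and $l\in\{1,\dots,d\}$, $$\alpha\Big(\prod_{r=n}^{n+m-1}(A_r+B^l_r)\Big)\ge\gamma(1-\gamma)^{m-1}\mathcal G_{[n,n+m)}-\mathcal H^l_{[n,n+m)}.$$
   Context: Setting (random batch CBO). Fix integers $N\ge2$, $d\ge1$, batch size $P\ge2$, drift $\gamma\in(0,1)$, noise level $\zeta\ge0$; $\mathcal N=\{1,\dots,N\}$. Weight functions $\omega_{S,j}:(\mathbb R^d)^N\to[0,\infty)$ for nonempty $S\subseteq\mathcal N$, $j\in\mathcal N$, with $\sum_{j\in S}\omega_{S,j}=1$ and $\omega_{S,j}=0$ for $j\notin S$. $\mathcal A$ is the set of partitions of $\mathcal N$ into $\lceil N/P\rceil$ batches, all of size $P$ except possibly one of size at most $P$; $(\mathcal B^n)_{n\ge0}$ i.i.d. uniform on $\mathcal A$; $[i]_n$ is the batch of $\mathcal B^n$ containing $i$. Noise arrays $(\eta^{i,l}_n)_{i,l}$ are i.i.d. in $n$ with $\mathbb E\eta^{i,l}_n=0$, $\mathbb E|\eta^{i,l}_n|^2\le\zeta^2$; initial data, batches, and noises are mutually independent. The dynamics is $\mathbf x^i_{n+1}=\mathbf x^i_n-\gamma(\mathbf x^i_n-\bar{\mathbf x}^{[i]_n,*}_n)-\sum_{l=1}^d(x^{i,l}_n-\bar x^{[i]_n,*,l}_n)\eta^{i,l}_n\mathbf e_l$ with $\bar{\mathbf x}^{S,*}_n=\sum_j\omega_{S,j}(X_n)\mathbf x^j_n$, $X_n=(\mathbf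 x^1_n,\dots,\mathbf x^N_n)$. Matrix notation: $W_n:=(\omega_{[i]_n,j}(X_n))_{i,j}$, $H^l_n:=\mathrm{diag}(\eta^{1,l}_n,\dots,\eta^{N,l}_n)$, $A_n:=(1-\gamma)I_N+\gamma W_n$, $B^l_n:=-H^l_n(I_N-W_n)$ (so that $\mathfrak x^l_{n+1}=(A_n+B^l_n)\mathfrak x^l_n$ with $\mathfrak x^l_n=(x^{1,l}_n,\dots,x^{N,l}_n)^\top$). Products are ordered as $\prod_{k=n_1}^{n_2}M_k:=M_{n_2}\cdots M_{n_1}$. $\alpha(A):=\min_{i,j}\sum_k\min\{a_{ik},a_{jk}\}$; $\|A\|_{1,\infty}:=\max_i\sum_j|a_{ij}|$. $\mathcal G_{[n,n+m)}:=\min_{i,j}|\{r:n\le r<n+m,[i]_r=[j]_r\}|$ and $\mathcal H^l_{[n,n+m)}:=2\big[\prod_{r=n}^{n+m-1}(1+2\|H^l_r\|_{1,\infty})-1\big]$. *)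

theory Defs
  imports Complex_Main "HOL-Library.Disjoint_Sets"
begin

(* Indices: particles i \<in> {1..N}, coordinates l \<in> {1..d}.
   A state X :: nat \<Rightarrow> nat \<Rightarrow> real stores X i l = x^{i,l}.
   N x N matrices are functions nat \<Rightarrow> nat \<Rightarrow> real, only entries with
   indices in {1..N} are meaningful. *)

type_synonym state = "nat \<Rightarrow> nat \<Rightarrow> real"
type_synonym mat = "nat \<Rightarrow> nat \<Rightarrow> real"

definition batch_partitions :: "nat \<Rightarrow> nat \<Rightarrow> nat set set set" where
  "batch_partitions N P =
     {B. partition_on {1..N} B \<and> card B = nat \<lceil>real N / real P\<rceil> \<and>
         (\<forall>S\<in>B. card S \<le> P) \<and>
         (\<forall>S\<in>B. \<forall>S'\<in>B. card S \<noteq> P \<longrightarrow> card S' \<noteq> P \<longrightarrow> S = S')}"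

definition batch_of :: "nat set set \<Rightarrow> nat \<Rightarrow> nat set" where
  "batch_of B i = (THE S. S \<in> B \<and> i \<in> S)"

definition admissible_weights :: "nat \<Rightarrow> (nat set \<Rightarrow> nat \<Rightarrow> state \<Rightarrow> real) \<Rightarrow> bool" where
  "admissible_weights N \<omega> \<longleftrightarrow>
     (\<forall>S X. S \<noteq> {} \<and> S \<subseteq> {1..N} \<longrightarrow>
        (\<forall>j\<in>{1..N}. \<omega> S j X \<ge> 0) \<and>
        (\<Sum>j\<in>S. \<omega> S j X) = 1 \<and>
        (\<forall>j\<in>{1..N}. j \<notin> S \<longrightarrow> \<omega> S j X = 0))"

definition xbar :: "nat \<Rightarrow> (nat set \<Rightarrow> nat \<Rightarrow> state \<Rightarrow> real) \<Rightarrow> nat set \<Rightarrow> state \<Rightarrow> nat \<Rightarrow> real" where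
  "xbar N \<omega> S X l = (\<Sum>j\<in>{1..N}. \<omega> S j X * X j l)"

text \<open>The random batch CBO trajectory, for one realization of initial data X0,
  batches Bs n and noises eta n i l.\<close>
primrec cbo :: "nat \<Rightarrow> real \<Rightarrow> (nat set \<Rightarrow> nat \<Rightarrow> state \<Rightarrow> real) \<Rightarrow> (nat \<Rightarrow> nat set set)
                  \<Rightarrow> (nat \<Rightarrow> nat \<Rightarrow> nat \<Rightarrow> real) \<Rightarrow> state \<Rightarrow> nat \<Rightarrow> state" where
  "cbo N \<gamma> \<omega> Bs \<eta> X0 0 = X0"
| "cbo N \<gamma> \<omega> Bs \<eta> X0 (Suc n) =
     (let X = cbo N \<gamma> \<omega> Bs \<eta> X0 n in
      (\<lambda>i l. X i l - \<gamma> * (X i l - xbar N \<omega> (batch_of (Bs n) i) X l)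
                   - (X i l - xbar N \<omega> (batch_of (Bs n) i) X l) * \<eta> n i l))"

definition idm :: mat where
  "idm i j = (if i = j then 1 else 0)"

definition matmul :: "nat \<Rightarrow> mat \<Rightarrow> mat \<Rightarrow> mat" where
  "matmul N M M' i j = (\<Sum>k\<in>{1..N}. M i k * M' k j)"

primrec matprod :: "nat \<Rightarrow> (nat \<Rightarrow> mat) \<Rightarrow> nat \<Rightarrow> nat \<Rightarrow> mat" where
  "matprod N M n 0 = idm"
| "matprod N M n (Suc m) = matmul N (M (n + m)) (matprod N M n m)"

definition Wmat :: "(nat set \<Rightarrow> nat \<Rightarrow> state \<Rightarrow> real) \<Rightarrow> (nat \<Rightarrow> nat set set) \<Rightarrow> (nat \<Rightarrow> state) \<Rightarrow> nat \<Rightarrow> mat" where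
  "Wmat \<omega> Bs X n i j = \<omega> (batch_of (Bs n) i) j (X n)"

definition Hmat :: "(nat \<Rightarrow> nat \<Rightarrow> nat \<Rightarrow> real) \<Rightarrow> nat \<Rightarrow> nat \<Rightarrow> mat" where
  "Hmat \<eta> n l i j = (if i = j then \<eta> n i l else 0)"

definition Amat :: "real \<Rightarrow> mat \<Rightarrow> mat" where
  "Amat \<gamma> W i j = (1 - \<gamma>) * idm i j + \<gamma> * W i j"

definition Bmat :: "nat \<Rightarrow> mat \<Rightarrow> mat \<Rightarrow> mat" where
  "Bmat N H W i j = - matmul N H (\<lambda>a b. idm a b - W a b) i j"

definition mat_add :: "mat \<Rightarrow> mat \<Rightarrow> mat" where
  "mat_add M M' i j = M i j + M' i j"

definition alpha :: "nat \<Rightarrow> mat \<Rightarrow> real" where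
  "alpha N A = Min {(\<Sum>k\<in>{1..N}. min (A i k) (A j k)) | i j. i \<in> {1..N} \<and> j \<in> {1..N}}"

definition norm1inf :: "nat \<Rightarrow> mat \<Rightarrow> real" where
  "norm1inf N A = Max {(\<Sum>j\<in>{1..N}. \<bar>A i j\<bar>) | i. i \<in> {1..N}}"

definition Gcal :: "nat \<Rightarrow> (nat \<Rightarrow> nat set set) \<Rightarrow> nat \<Rightarrow> nat \<Rightarrow> nat" where
  "Gcal N Bs n m = Min {card {r. n \<le> r \<and> r < n + m \<and> batch_of (Bs r) i = batch_of (Bs r) j} | i j.
                         i \<in> {1..N} \<and> j \<in> {1..N}}"

definition Hcal :: "nat \<Rightarrow> (nat \<Rightarrow> nat \<Rightarrow> nat \<Rightarrow> real) \<Rightarrow> nat \<Rightarrow> nat \<Rightarrow> nat \<Rightarrow> real" where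
  "Hcal N \<eta> l n m = 2 * ((\<Prod>r\<in>{n..<n+m}. 1 + 2 * norm1inf N (Hmat \<eta> r l)) - 1)"

end

theory Submission
  imports Defs
begin

lemma batch_mem:
  assumes "partition_on A B" "i \<in> A"
  shows "batch_of B i \<in> B \<and> i \<in> batch_of B i \<and> batch_of B i \<subseteq> A"
proof -
  from assms partition_onD1 obtain S where S: "S \<in> B" "i \<in> S" by blast
  have d: "disjoint B" by (rule partition_onD2[OF assms(1)])
  have u: "S' = S" if "S' \<in> B \<and> i \<in> S'" for S'
  proof (rule ccontr)
    assume "S' \<noteq> S"
    then have "S' \<inter> S = {}" using disjointD[OF d] that S(1) by blast
    then show False using that S(2) by blast
  qed
  have "batch_of B i = S" unfolding batch_of_def
  proof (rule the_equality)
    show "S \<in> B \<and> i \<in> S" using S by blast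
    show "\<And>S'. S' \<in> B \<and> i \<in> S' \<Longrightarrow> S' = S" by (rule u)
  qed
  then show ?thesis using S partition_onD1[OF assms(1)] by auto
qed

definition rs :: "nat \<Rightarrow> mat \<Rightarrow> nat \<Rightarrow> real" where
  "rs N M i = (\<Sum>k\<in>{1..N}. \<bar>M i k\<bar>)"

lemma sum_idm: "i \<in> {1..N} \<Longrightarrow> (\<Sum>k\<in>{1..N}. idm i k * f k) = f i"
proof -
  assume i: "i \<in> {1..N}"
  have "(\<Sum>k\<in>{1..N}. idm i k * f k) = (\<Sum>k\<in>{1..N}. if i = k then f k else 0)"
    by (rule sum.cong) (auto simp: idm_def)
  also have "\<dots> = f i" using i by (simp add: sum.delta)
  finally show ?thesis .
qed

lemma sum_idm': "i \<in> {1..N} \<Longrightarrow> (\<Sum>k\<in>{1..N}. idm i k) = 1"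
  using sum_idm[of i N "\<lambda>_. 1"] by simp

lemma rs_matmul:
  assumes "\<And>k. k \<in> {1..N} \<Longrightarrow> rs N M2 k \<le> c"
  shows "rs N (matmul N M1 M2) i \<le> rs N M1 i * c"
proof -
  have "rs N (matmul N M1 M2) i \<le> (\<Sum>j\<in>{1..N}. \<Sum>k\<in>{1..N}. \<bar>M1 i k\<bar> * \<bar>M2 k j\<bar>)"
    unfolding rs_def matmul_def
    by (rule sum_mono) (metis (no_types, lifting) abs_mult sum_abs sum.cong)
  also have "\<dots> = (\<Sum>k\<in>{1..N}. \<bar>M1 i k\<bar> * rs N M2 k)"
    unfolding rs_def by (subst sum.swap) (simp add: sum_distrib_left)
  also have "\<dots> \<le> (\<Sum>k\<in>{1..N}. \<bar>M1 i k\<bar> * c)"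
    by (rule sum_mono) (simp add: assms mult_left_mono)
  also have "\<dots> = rs N M1 i * c" unfolding rs_def by (simp add: sum_distrib_right)
  finally show ?thesis .
qed

lemma A_expand:
  assumes "i \<in> {1..N}"
  shows "matmul N (Amat \<gamma> Wr) Q i k = (1 - \<gamma>) * Q i k + \<gamma> * matmul N Wr Q i k"
proof -
  have "matmul N (Amat \<gamma> Wr) Q i k
      = (\<Sum>p\<in>{1..N}. (1 - \<gamma>) * (idm i p * Q p k) + \<gamma> * (Wr i p * Q p k))"
    unfolding matmul_def Amat_def by (rule sum.cong) (auto simp: algebra_simps)
  also have "\<dots> = (1 - \<gamma>) * Q i k + \<gamma> * matmul N Wr Q i k"
    unfolding matmul_def
    using sum_idm[OF assms, of "\<lambda>p. Q p k"]
    by (simp add: sum.distrib sum_distrib_left[symmetric])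
  finally show ?thesis .
qed

lemma matmul_rowsum:
  assumes "\<And>p. p \<in> {1..N} \<Longrightarrow> (\<Sum>k\<in>{1..N}. Q p k) = 1"
  shows "(\<Sum>k\<in>{1..N}. matmul N M Q i k) = (\<Sum>p\<in>{1..N}. M i p)"
proof -
  have "(\<Sum>k\<in>{1..N}. matmul N M Q i k) = (\<Sum>p\<in>{1..N}. M i p * (\<Sum>k\<in>{1..N}. Q p k))"
    unfolding matmul_def by (subst sum.swap) (simp add: sum_distrib_left)
  also have "\<dots> = (\<Sum>p\<in>{1..N}. M i p)"
  proof (rule sum.cong)
    fix p assume "p \<in> {1..N}" then show "M i p * (\<Sum>k\<in>{1..N}. Q p k) = M i p" using assms[of p] by simp
  qed simp
  finally show ?thesis .
qed

lemma matmul_nonneg: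
  assumes "\<And>p. p \<in> {1..N} \<Longrightarrow> 0 \<le> M i p" "\<And>p. p \<in> {1..N} \<Longrightarrow> 0 \<le> Q p k"
  shows "0 \<le> matmul N M Q i k"
  unfolding matmul_def using assms by (intro sum_nonneg) auto

definition stoch :: "nat \<Rightarrow> mat \<Rightarrow> bool" where
  "stoch N M \<longleftrightarrow> (\<forall>i\<in>{1..N}. (\<forall>k\<in>{1..N}. 0 \<le> M i k) \<and> (\<Sum>k\<in>{1..N}. M i k) = 1)"

lemma stoch_rs: "stoch N M \<Longrightarrow> i \<in> {1..N} \<Longrightarrow> rs N M i = 1"
  unfolding stoch_def rs_def by (metis (no_types, lifting) abs_of_nonneg sum.cong)

lemma stoch_idm: "stoch N idm"
  unfolding stoch_def using sum_idm' by (auto simp: idm_def)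

lemma stoch_A:
  assumes "stoch N Wr" "0 \<le> \<gamma>" "\<gamma> \<le> 1" "stoch N Q"
  shows "stoch N (matmul N (Amat \<gamma> Wr) Q)"
  unfolding stoch_def
proof (intro ballI conjI)
  fix i assume i: "i \<in> {1..N}"
  show "0 \<le> matmul N (Amat \<gamma> Wr) Q i k" if "k \<in> {1..N}" for k
    unfolding A_expand[OF i] using assms i that
    by (intro add_nonneg_nonneg mult_nonneg_nonneg matmul_nonneg) (auto simp: stoch_def)
  have "(\<Sum>k\<in>{1..N}. matmul N (Amat \<gamma> Wr) Q i k)
      = (1 - \<gamma>) * (\<Sum>k\<in>{1..N}. Q i k) + \<gamma> * (\<Sum>k\<in>{1..N}. matmul N Wr Q i k)"
    unfolding A_expand[OF i] by (simp add: sum.distrib sum_distrib_left)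
  also have "\<dots> = 1"
    using assms i by (subst matmul_rowsum[where Q=Q]) (auto simp: stoch_def)
  finally show "(\<Sum>k\<in>{1..N}. matmul N (Amat \<gamma> Wr) Q i k) = 1" .
qed

lemma stoch_prod:
  assumes "\<And>r. stoch N (W r)" "0 \<le> \<gamma>" "\<gamma> \<le> 1"
  shows "stoch N (matprod N (\<lambda>r. Amat \<gamma> (W r)) n m)"
  by (induction m) (auto simp: stoch_idm intro!: stoch_A assms)

lemma card_step:
  "card {r. n \<le> r \<and> r < n + Suc m \<and> T r}
   = card {r. n \<le> r \<and> r < n + m \<and> T r} + (if T (n + m) then 1 else 0)"
proof -
  have e: "{r. n \<le> r \<and> r < n + Suc m \<and> T r}
        = {r. n \<le> r \<and> r < n + m \<and> T r} \<union> (if T (n+m) then {n+m} else {})"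
    by (cases "T (n+m)") (auto simp: less_Suc_eq)
  have f: "finite {r. n \<le> r \<and> r < n + m \<and> T r}" by (rule finite_subset[of _ "{..<n+m}"]) auto
  show ?thesis unfolding e using f by (auto simp: card_insert_if)
qed

lemma overlap:
  assumes W: "\<And>r. stoch N (W r)" and g: "0 < \<gamma>" "\<gamma> < 1"
    and tog: "\<And>r i j k. T r i j \<Longrightarrow> W r i k = W r j k"
    and i: "i \<in> {1..N}" and j: "j \<in> {1..N}"
  shows "\<gamma> * (1 - \<gamma>) ^ m * real (card {r. n \<le> r \<and> r < n + m \<and> T r i j})
    \<le> (1 - \<gamma>) * (\<Sum>k\<in>{1..N}. min (matprod N (\<lambda>r. Amat \<gamma> (W r)) n m i k)
                                      (matprod N (\<lambda>r. Amat \<gamma> (W r)) n m j k))"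
proof (induction m)
  case 0
  have "0 \<le> (\<Sum>k\<in>{1..N}. min (idm i k) (idm j k))"
    by (intro sum_nonneg) (auto simp: idm_def)
  moreover have e: "{r. n \<le> r \<and> r < n + 0 \<and> T r i j} = {}" by auto
  ultimately show ?case unfolding e using g by simp
next
  case (Suc m)
  define Q where "Q = matprod N (\<lambda>r. Amat \<gamma> (W r)) n m"
  define C where "C = matmul N (W (n + m)) Q"
  have sQ: "stoch N Q" unfolding Q_def using W g by (intro stoch_prod) auto
  have Cnn: "0 \<le> C a k" if "a \<in> {1..N}" "k \<in> {1..N}" for a k
    unfolding C_def using W[of "n+m"] sQ that by (intro matmul_nonneg) (auto simp: stoch_def)
  have Csum: "(\<Sum>k\<in>{1..N}. C a k) = 1" if "a \<in> {1..N}" for a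
    unfolding C_def using W[of "n+m"] sQ that
    by (subst matmul_rowsum[where Q=Q]) (auto simp: stoch_def)
  define s where "s = (\<Sum>k\<in>{1..N}. min (Q i k) (Q j k))"
  define s' where "s' = (\<Sum>k\<in>{1..N}. min (matprod N (\<lambda>r. Amat \<gamma> (W r)) n (Suc m) i k)
                                      (matprod N (\<lambda>r. Amat \<gamma> (W r)) n (Suc m) j k))"
  have s'eq: "s' = (\<Sum>k\<in>{1..N}. min ((1 - \<gamma>) * Q i k + \<gamma> * C i k) ((1 - \<gamma>) * Q j k + \<gamma> * C j k))"
    unfolding s'_def C_def Q_def using i j by (simp add: A_expand)
  define t where "t = (if T (n + m) i j then 1 else 0 :: real)"
  have key: "s' \<ge> (1 - \<gamma>) * s + \<gamma> * t"
  proof (cases "T (n + m) i j")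
    case True
    have CC: "C i k = C j k" for k
      unfolding C_def matmul_def using tog[OF True] by simp
    have "s' = (\<Sum>k\<in>{1..N}. (1 - \<gamma>) * min (Q i k) (Q j k) + \<gamma> * C i k)"
      unfolding s'eq CC using g by (intro sum.cong) (auto simp: min_def)
    also have "\<dots> = (1 - \<gamma>) * s + \<gamma>"
      using Csum[OF i] by (simp add: s_def sum.distrib sum_distrib_left[symmetric])
    finally show ?thesis using True by (simp add: t_def)
  next
    case False
    have "(1 - \<gamma>) * s = (\<Sum>k\<in>{1..N}. (1 - \<gamma>) * min (Q i k) (Q j k))"
      by (simp add: s_def sum_distrib_left)
    also have "\<dots> \<le> s'"
      unfolding s'eq
    proof (rule sum_mono)
      fix k assume k: "k \<in> {1..N}"
      have "0 \<le> \<gamma> * C i k" "0 \<le> \<gamma> * C j k" using Cnn i j k g by auto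
      moreover have "(1 - \<gamma>) * min (Q i k) (Q j k) \<le> (1 - \<gamma>) * Q i k"
        "(1 - \<gamma>) * min (Q i k) (Q j k) \<le> (1 - \<gamma>) * Q j k"
        using g by (auto intro: mult_left_mono)
      ultimately show "(1 - \<gamma>) * min (Q i k) (Q j k)
            \<le> min ((1 - \<gamma>) * Q i k + \<gamma> * C i k) ((1 - \<gamma>) * Q j k + \<gamma> * C j k)"
        by (smt (verit))
    qed
    finally show ?thesis using False by (simp add: t_def)
  qed
  define c where "c = real (card {r. n \<le> r \<and> r < n + m \<and> T r i j})"
  have IH: "\<gamma> * (1 - \<gamma>) ^ m * c \<le> (1 - \<gamma>) * s" using Suc.IH unfolding c_def s_def Q_def .
  have c0: "0 \<le> c" "0 \<le> t" "t \<le> 1" by (auto simp: c_def t_def)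
  have pm: "(1 - \<gamma>) ^ m \<le> 1" using g by (intro power_le_one) auto
  have "\<gamma> * (1 - \<gamma>) ^ Suc m * (c + t) = (1 - \<gamma>) * (\<gamma> * (1 - \<gamma>) ^ m * c) + (1 - \<gamma>) * (\<gamma> * t) * (1 - \<gamma>) ^ m"
    by (simp add: algebra_simps)
  also have "\<dots> \<le> (1 - \<gamma>) * ((1 - \<gamma>) * s) + (1 - \<gamma>) * (\<gamma> * t) * 1"
    using IH pm g c0 by (intro add_mono mult_left_mono) auto
  also have "\<dots> = (1 - \<gamma>) * ((1 - \<gamma>) * s + \<gamma> * t)" by (simp add: algebra_simps)
  also have "\<dots> \<le> (1 - \<gamma>) * s'" using key g by (intro mult_left_mono) auto
  finally have fin: "\<gamma> * (1 - \<gamma>) ^ Suc m * (c + t) \<le> (1 - \<gamma>) * s'" .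
  have ct: "real (card {r. n \<le> r \<and> r < n + Suc m \<and> T r i j}) = c + t"
    using card_step[of n m "\<lambda>r. T r i j"] by (simp add: c_def t_def)
  show ?case using fin unfolding ct s'_def .
qed

lemma diff_split:
  "matmul N (mat_add A B) P i c - matmul N A Q i c
   = matmul N A (\<lambda>a c. P a c - Q a c) i c + matmul N B P i c"
  unfolding matmul_def mat_add_def
  by (simp add: sum.distrib[symmetric] sum_subtractf[symmetric] algebra_simps)

lemma rs_add: "rs N (\<lambda>a c. X a c + Y a c) i \<le> rs N X i + rs N Y i"
  unfolding rs_def by (simp add: sum.distrib[symmetric] sum_mono abs_triangle_ineq)

lemma rs_nonneg: "0 \<le> rs N X i"
  unfolding rs_def by (simp add: sum_nonneg)

lemma stoch_Amat:
  assumes "stoch N Wr" "0 \<le> \<gamma>" "\<gamma> \<le> 1"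
  shows "stoch N (Amat \<gamma> Wr)"
  unfolding stoch_def
proof (intro ballI conjI)
  fix i assume i: "i \<in> {1..N}"
  show "0 \<le> Amat \<gamma> Wr i k" if "k \<in> {1..N}" for k
    using assms i that by (auto simp: Amat_def idm_def stoch_def)
  have "(\<Sum>k\<in>{1..N}. Amat \<gamma> Wr i k) = (1 - \<gamma>) * (\<Sum>k\<in>{1..N}. idm i k) + \<gamma> * (\<Sum>k\<in>{1..N}. Wr i k)"
    unfolding Amat_def by (simp add: sum.distrib sum_distrib_left)
  also have "\<dots> = 1" using assms i sum_idm'[OF i] by (auto simp: stoch_def)
  finally show "(\<Sum>k\<in>{1..N}. Amat \<gamma> Wr i k) = 1" .
qed

lemma perturb:
  assumes W: "\<And>r. stoch N (W r)" and g: "0 \<le> \<gamma>" "\<gamma> \<le> 1"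
    and B: "\<And>r i. i \<in> {1..N} \<Longrightarrow> rs N (Bm r) i \<le> b r"
    and b0: "\<And>r. 0 \<le> b r"
  shows "\<forall>i\<in>{1..N}. rs N (\<lambda>a c. matprod N (\<lambda>r. mat_add (Amat \<gamma> (W r)) (Bm r)) n m a c
                                 - matprod N (\<lambda>r. Amat \<gamma> (W r)) n m a c) i
            \<le> (\<Prod>r\<in>{n..<n+m}. 1 + b r) - 1"
proof (induction m)
  case 0
  then show ?case by (simp add: rs_def)
next
  case (Suc m)
  define P where "P = matprod N (\<lambda>r. mat_add (Amat \<gamma> (W r)) (Bm r)) n m"
  define Q where "Q = matprod N (\<lambda>r. Amat \<gamma> (W r)) n m"
  define D where "D = (\<lambda>a c. P a c - Q a c)"
  define E where "E = (\<Prod>r\<in>{n..<n+m}. 1 + b r)"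
  have E1: "1 \<le> E" unfolding E_def using b0 by (intro prod_ge_1) (auto intro: add_nonneg_nonneg)
  then have E0: "0 \<le> E" by simp
  have IH: "\<And>k. k \<in> {1..N} \<Longrightarrow> rs N D k \<le> E - 1"
    using Suc.IH unfolding D_def P_def Q_def E_def by blast
  have sQ: "stoch N Q" unfolding Q_def using W g by (intro stoch_prod) auto
  have sA: "stoch N (Amat \<gamma> (W (n + m)))" using W g by (intro stoch_Amat) auto
  have rP: "rs N P k \<le> E" if k: "k \<in> {1..N}" for k
  proof -
    have "rs N P k = rs N (\<lambda>a c. Q a c + D a c) k" unfolding D_def by simp
    also have "\<dots> \<le> rs N Q k + rs N D k" by (rule rs_add)
    also have "\<dots> \<le> 1 + (E - 1)" using stoch_rs[OF sQ k] IH[OF k] by simp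
    finally show ?thesis by simp
  qed
  have prodS: "(\<Prod>r\<in>{n..<n+Suc m}. 1 + b r) = E * (1 + b (n + m))"
    unfolding E_def by (simp add: prod.atLeastLessThan_Suc)
  show ?case
  proof
    fix i assume i: "i \<in> {1..N}"
    have "rs N (\<lambda>a c. matprod N (\<lambda>r. mat_add (Amat \<gamma> (W r)) (Bm r)) n (Suc m) a c
                    - matprod N (\<lambda>r. Amat \<gamma> (W r)) n (Suc m) a c) i
        = rs N (\<lambda>a c. matmul N (Amat \<gamma> (W (n + m))) D a c + matmul N (Bm (n + m)) P a c) i"
      unfolding D_def P_def Q_def by (simp add: diff_split)
    also have "\<dots> \<le> rs N (matmul N (Amat \<gamma> (W (n + m))) D) i + rs N (matmul N (Bm (n + m)) P) i"
      by (rule rs_add)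
    also have "\<dots> \<le> rs N (Amat \<gamma> (W (n + m))) i * (E - 1) + rs N (Bm (n + m)) i * E"
      by (intro add_mono rs_matmul IH rP)
    also have "\<dots> \<le> 1 * (E - 1) + b (n + m) * E"
      using stoch_rs[OF sA i] B[OF i, of "n+m"] E0 E1 by (intro add_mono mult_right_mono) auto
    also have "\<dots> = (\<Prod>r\<in>{n..<n+Suc m}. 1 + b r) - 1"
      unfolding prodS by (simp add: algebra_simps)
    finally show "rs N (\<lambda>a c. matprod N (\<lambda>r. mat_add (Amat \<gamma> (W r)) (Bm r)) n (Suc m) a c
                    - matprod N (\<lambda>r. Amat \<gamma> (W r)) n (Suc m) a c) i
            \<le> (\<Prod>r\<in>{n..<n+Suc m}. 1 + b r) - 1" .
  qed
qed

lemma fin_set2: "finite A \<Longrightarrow> finite {f i j | i j. i \<in> A \<and> j \<in> A}"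
  by (rule finite_subset[of _ "(\<lambda>(i,j). f i j) ` (A \<times> A)"]) auto

lemma min_pert: "min (a::real) b \<ge> min a' b' - \<bar>a - a'\<bar> - \<bar>b - b'\<bar>"
  by (auto simp: min_def abs_if)

theorem lemma4p3:
  fixes N d P m n l :: nat
    and \<gamma> :: real
    and \<omega> :: "nat set \<Rightarrow> nat \<Rightarrow> state \<Rightarrow> real"
    and Bs :: "nat \<Rightarrow> nat set set"
    and \<eta> :: "nat \<Rightarrow> nat \<Rightarrow> nat \<Rightarrow> real"
    and X0 :: state
  assumes "2 \<le> N" and "1 \<le> d" and "2 \<le> P"
    and "0 < \<gamma>" and "\<gamma> < 1"
    and "admissible_weights N \<omega>"
    and "\<forall>r. Bs r \<in> batch_partitions N P"
    and "1 \<le> m" and "l \<in> {1..d}"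
  shows "let X = cbo N \<gamma> \<omega> Bs \<eta> X0;
             W = Wmat \<omega> Bs X
         in alpha N (matprod N (\<lambda>r. mat_add (Amat \<gamma> (W r)) (Bmat N (Hmat \<eta> r l) (W r))) n m)
            \<ge> \<gamma> * (1 - \<gamma>) ^ (m - 1) * real (Gcal N Bs n m) - Hcal N \<eta> l n m"
proof -
  define X where "X = cbo N \<gamma> \<omega> Bs \<eta> X0"
  define W where "W = Wmat \<omega> Bs X"
  have g: "0 < \<gamma>" "\<gamma> < 1" using assms by auto
  have N1: "1 \<in> {1..N}" using assms by auto
  have sW: "stoch N (W r)" for r
    unfolding stoch_def
  proof (intro ballI conjI)
    fix i assume i: "i \<in> {1..N}"
    have part: "partition_on {1..N} (Bs r)" using assms(7) by (auto simp: batch_partitions_def)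
    define S where "S = batch_of (Bs r) i"
    have S: "S \<noteq> {}" "S \<subseteq> {1..N}" using batch_mem[OF part i] unfolding S_def by auto
    have adm: "(\<forall>j\<in>{1..N}. \<omega> S j (X r) \<ge> 0) \<and> (\<Sum>j\<in>S. \<omega> S j (X r)) = 1 \<and>
        (\<forall>j\<in>{1..N}. j \<notin> S \<longrightarrow> \<omega> S j (X r) = 0)"
      using assms(6) S unfolding admissible_weights_def by blast
    show "0 \<le> W r i k" if "k \<in> {1..N}" for k
      using adm that unfolding W_def Wmat_def S_def by auto
    have "(\<Sum>k\<in>{1..N}. W r i k) = (\<Sum>k\<in>S. \<omega> S k (X r))"
      unfolding W_def Wmat_def S_def[symmetric]
      by (rule sum.mono_neutral_right) (use S adm in auto)
    then show "(\<Sum>k\<in>{1..N}. W r i k) = 1" using adm by simp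
  qed
  define h where "h r = norm1inf N (Hmat \<eta> r l)" for r
  have fin1: "finite {(\<Sum>j\<in>{1..N}. \<bar>A i j\<bar>) | i. i \<in> {1..N}}" for A :: mat
    by (simp add: finite_image_set)
  have rsH: "rs N (Hmat \<eta> r l) i \<le> h r" if "i \<in> {1..N}" for r i
    unfolding h_def norm1inf_def rs_def using that by (intro Max_ge[OF fin1]) auto
  have h0: "0 \<le> h r" for r using rsH[OF N1, of r] rs_nonneg[of N "Hmat \<eta> r l" 1] by linarith
  have rsIW: "rs N (\<lambda>a b. idm a b - W r a b) k \<le> 2" if k: "k \<in> {1..N}" for r k
  proof -
    have "rs N (\<lambda>a b. idm a b - W r a b) k \<le> (\<Sum>j\<in>{1..N}. idm k j + W r k j)"
      unfolding rs_def
    proof (intro sum_mono)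
      fix j assume j: "j \<in> {1..N}"
      have "0 \<le> W r k j" using sW[of r] k j by (auto simp: stoch_def)
      then show "\<bar>idm k j - W r k j\<bar> \<le> idm k j + W r k j" by (auto simp: idm_def abs_if)
    qed
    also have "\<dots> = 2" using sum_idm'[OF k] sW[of r] k by (simp add: sum.distrib stoch_def)
    finally show ?thesis .
  qed
  have rsB: "rs N (Bmat N (Hmat \<eta> r l) (W r)) i \<le> 2 * h r" if i: "i \<in> {1..N}" for r i
  proof -
    have "rs N (Bmat N (Hmat \<eta> r l) (W r)) i = rs N (matmul N (Hmat \<eta> r l) (\<lambda>a b. idm a b - W r a b)) i"
      unfolding rs_def Bmat_def by simp
    also have "\<dots> \<le> rs N (Hmat \<eta> r l) i * 2" by (rule rs_matmul[OF rsIW])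
    also have "\<dots> \<le> 2 * h r" using rsH[OF i, of r] by simp
    finally show ?thesis .
  qed
  define PP where "PP = matprod N (\<lambda>r. mat_add (Amat \<gamma> (W r)) (Bmat N (Hmat \<eta> r l) (W r))) n m"
  define Q where "Q = matprod N (\<lambda>r. Amat \<gamma> (W r)) n m"
  define e where "e = (\<Prod>r\<in>{n..<n+m}. 1 + 2 * h r) - 1"
  have pert: "rs N (\<lambda>a c. PP a c - Q a c) i \<le> e" if "i \<in> {1..N}" for i
  proof -
    have "\<forall>i\<in>{1..N}. rs N (\<lambda>a c. PP a c - Q a c) i \<le> e" unfolding PP_def Q_def e_def
      by (rule perturb) (use sW g rsB h0 in \<open>auto intro: less_imp_le\<close>)
    then show ?thesis using that by blast
  qed
  define T where "T r i j = (batch_of (Bs r) i = batch_of (Bs r) j)" for r i j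
  define G where "G = Gcal N Bs n m"
  have tog: "W r i k = W r j k" if "T r i j" for r i j k
    using that unfolding T_def W_def Wmat_def by simp
  have GT: "G \<le> card {r. n \<le> r \<and> r < n + m \<and> T r i j}" if "i \<in> {1..N}" "j \<in> {1..N}" for i j
    unfolding G_def Gcal_def T_def by (rule Min_le[OF fin_set2[where f="\<lambda>i j. card {r. n \<le> r \<and> r < n + m \<and> batch_of (Bs r) i = batch_of (Bs r) j}"]])
      (use that in auto)
  have c: "\<gamma> * (1 - \<gamma>) ^ (m - 1) * real G - 2 * e
      \<le> (\<Sum>k\<in>{1..N}. min (PP i k) (PP j k))" if i: "i \<in> {1..N}" and j: "j \<in> {1..N}" for i j
  proof -
    define s where "s = (\<Sum>k\<in>{1..N}. min (Q i k) (Q j k))"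
    have ov: "\<gamma> * (1 - \<gamma>) ^ m * real (card {r. n \<le> r \<and> r < n + m \<and> T r i j}) \<le> (1 - \<gamma>) * s"
      unfolding s_def Q_def by (rule overlap[OF sW g tog i j])
    have pm: "(1 - \<gamma>) ^ m = (1 - \<gamma>) * (1 - \<gamma>) ^ (m - 1)" using assms(8)
      by (metis Suc_diff_1 less_le_trans power_Suc zero_less_one)
    have ov2: "\<gamma> * (1 - \<gamma>) ^ (m - 1) * real (card {r. n \<le> r \<and> r < n + m \<and> T r i j}) \<le> s"
      using ov g unfolding pm by (simp add: mult.assoc mult.left_commute)
    have "\<gamma> * (1 - \<gamma>) ^ (m - 1) * real G \<le> \<gamma> * (1 - \<gamma>) ^ (m - 1) * real (card {r. n \<le> r \<and> r < n + m \<and> T r i j})"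
      using GT[OF i j] g by (intro mult_left_mono) auto
    also have "\<dots> \<le> s" by (rule ov2)
    finally have A: "\<gamma> * (1 - \<gamma>) ^ (m - 1) * real G \<le> s" .
    have "s - rs N (\<lambda>a c. PP a c - Q a c) i - rs N (\<lambda>a c. PP a c - Q a c) j
        = (\<Sum>k\<in>{1..N}. min (Q i k) (Q j k) - \<bar>PP i k - Q i k\<bar> - \<bar>PP j k - Q j k\<bar>)"
      unfolding s_def rs_def by (simp add: sum_subtractf)
    also have "\<dots> \<le> (\<Sum>k\<in>{1..N}. min (PP i k) (PP j k))"
      by (intro sum_mono min_pert)
    finally show ?thesis using A pert[OF i] pert[OF j] by linarith
  qed
  have fin2: "finite {(\<Sum>k\<in>{1..N}. min (PP i k) (PP j k)) | i j. i \<in> {1..N} \<and> j \<in> {1..N}}"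
    by (rule fin_set2) simp
  have "\<gamma> * (1 - \<gamma>) ^ (m - 1) * real G - 2 * e \<le> alpha N PP"
    unfolding alpha_def using N1 c
    by (subst Min_ge_iff[OF fin2]) auto
  moreover have "Hcal N \<eta> l n m = 2 * e" unfolding Hcal_def e_def h_def by simp
  ultimately show ?thesis unfolding Let_def X_def[symmetric] W_def[symmetric] PP_def[symmetric] G_def[symmetric]
    by linarith
qed

end
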